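(* Let $\mu(t)$ and $\omega^{2}(t)$ be given functions of time. If $r(t)$ is a solution of the initial value problem for the linear ODE $$\ddot{r}+\frac{\dot{\mu}(t)}{\mu(t)}\dot{r}+\omega^{2}(t)r=0,\qquad r(t_{0})=r_{0}\neq 0,\quad \dot{r}(t_{0})=0,$$ then the initial value problem for the nonhomogeneous Burgers equation with variable coefficients $$U_{t}+\frac{\dot{\mu}(t)}{\mu(t)}U+U U_{x}=\frac{1}{2\mu(t)}U_{xx}-\omega^{2}(t)x,\qquad U(x,t)|_{t=t_{0}}=U(x,t_{0}),\quad -\infty<x<\infty,$$ has a solution in the following forms: (a) $$U(x,t)=\frac{\dot{r}(t)}{r(t)}x+\frac{r(t_{0})}{\mu(t)r(t)}V\left(\eta(x,t),\tau(t)\right),$$ where $$\eta(x,t)=\frac{r(t_{0})}{r(t)}x,\qquad \tau(t)=r^{2}(t_{0})\int^{t}\frac{d\xi}{\mu(\xi)r^{2}(\xi)},\quad \tau(t_{0})=0,$$ and the function $V(\eta,\tau)$ satisfies the initial value problem for the standard Burgers equation $$V_{\tau}+V V_{\eta}=\frac{1}{2}V_{\eta\eta},\qquad V(\eta,0)=\mu(t_{0})U(\eta,t_{0}).$$ (b) $$U(x,t)=\frac{\dot{r}(t)}{r(t)}x-\frac{r(t_{0})}{\mu(t)r(t)}\frac{\varphi_{\eta}(\eta(x,t),\tau(t))}{\varphi(\eta(x,t),\tau(t))},$$ where $\eta(x,t)=\frac{r(t_{0})}{r(t)}x$ and $\tau(t)=r^{2}(t_{0})\int^{t}\frac{d\xi}{\mu(\xi)r^{2}(\xi)}$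 with $\tau(t_{0})=0$ (as in part (a)), and $\varphi(\eta,\tau)$ satisfies the initial value problem for the heat equation $$\varphi_{\tau}=\frac{1}{2}\varphi_{\eta\eta},\qquad \varphi(\eta,0)=\exp\left[-\int^{\eta}\mu(t_{0})U(\xi,t_{0})d\xi\right].$$
   Context: Here $\dot{\mu}(t)/\mu(t)$ is the damping term, $1/(2\mu(t))$ is the diffusion coefficient, and $-\omega^{2}(t)x$ is the forcing term (linear in the space variable $x$) of the nonhomogeneous Burgers equation. *)

theory Defs
  imports "HOL-Analysis.Analysis"
begin

definition oint :: "real \<Rightarrow> real \<Rightarrow> (real \<Rightarrow> real) \<Rightarrow> real" where
  "oint a b f = (if a \<le> b then integral {a..b} f else - integral {b..a} f)"

definition pd1 :: "(real \<Rightarrow> real \<Rightarrow> real) \<Rightarrow> real \<Rightarrow> real \<Rightarrow> real" where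
  "pd1 F x t = deriv (\<lambda>y. F y t) x"

definition pd2 :: "(real \<Rightarrow> real \<Rightarrow> real) \<Rightarrow> real \<Rightarrow> real \<Rightarrow> real" where
  "pd2 F x t = deriv (\<lambda>s. F x s) t"

definition nh_burgers_sol ::
  "(real \<Rightarrow> real) \<Rightarrow> (real \<Rightarrow> real) \<Rightarrow> real set \<Rightarrow> (real \<Rightarrow> real \<Rightarrow> real) \<Rightarrow> bool" where
  "nh_burgers_sol mu omega2 J U \<longleftrightarrow>
     (\<forall>t\<in>J. \<forall>x.
        (\<lambda>s. U x s) differentiable (at t) \<and>
        (\<lambda>y. U y t) differentiable (at x) \<and>
        (\<lambda>y. pd1 U y t) differentiable (at x) \<and>
        pd2 U x t + deriv mu t / mu t * U x t + U x t * pd1 U x t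
          = 1 / (2 * mu t) * pd1 (pd1 U) x t - omega2 t * x)"

definition burgers_sol :: "real set \<Rightarrow> (real \<Rightarrow> real \<Rightarrow> real) \<Rightarrow> bool" where
  "burgers_sol T V \<longleftrightarrow>
     (\<forall>\<tau>\<in>T. \<forall>\<eta>.
        (\<lambda>p. V (fst p) (snd p)) differentiable (at (\<eta>, \<tau>)) \<and>
        (\<lambda>y. pd1 V y \<tau>) differentiable (at \<eta>) \<and>
        pd2 V \<eta> \<tau> + V \<eta> \<tau> * pd1 V \<eta> \<tau> = 1 / 2 * pd1 (pd1 V) \<eta> \<tau>)"

definition heat_sol :: "real set \<Rightarrow> (real \<Rightarrow> real \<Rightarrow> real) \<Rightarrow> bool" where
  "heat_sol T \<phi> \<longleftrightarrow>
     (\<forall>\<tau>\<in>T. \<forall>\<eta>.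
        (\<lambda>p. \<phi> (fst p) (snd p)) differentiable (at (\<eta>, \<tau>)) \<and>
        (\<lambda>p. pd1 \<phi> (fst p) (snd p)) differentiable (at (\<eta>, \<tau>)) \<and>
        (\<lambda>y. pd1 (pd1 \<phi>) y \<tau>) differentiable (at \<eta>) \<and>
        (\<lambda>y. pd2 \<phi> y \<tau>) differentiable (at \<eta>) \<and>
        pd2 (pd1 \<phi>) \<eta> \<tau> = pd1 (pd2 \<phi>) \<eta> \<tau> \<and>
        pd2 \<phi> \<eta> \<tau> = 1 / 2 * pd1 (pd1 \<phi>) \<eta> \<tau>)"

end

theory Submission
  imports Defs
begin



lemma joint_chain:
  fixes V :: "real \<Rightarrow> real \<Rightarrow> real"
  assumes dV: "(\<lambda>p. V (fst p) (snd p)) differentiable (at (x,y))"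
    and da: "(\<alpha> has_real_derivative a) (at s)" and db: "(\<beta> has_real_derivative b) (at s)"
    and ax: "\<alpha> s = x" and by_: "\<beta> s = y"
  shows "((\<lambda>s. V (\<alpha> s) (\<beta> s)) has_real_derivative (a * pd1 V x y + b * pd2 V x y)) (at s)"
proof -
  obtain D where D: "((\<lambda>p. V (fst p) (snd p)) has_derivative D) (at (x,y))"
    using dV unfolding differentiable_def by blast
  have lin: "linear D" using D has_derivative_linear by blast
  have Dsplit: "D (h*a', h*b') = h * (a' * D (1,0) + b' * D (0,1))" for h a' b'
  proof -
    have "(h*a', h*b') = (h*a') *\<^sub>R (1,0) + (h*b') *\<^sub>R ((0,1)::real\<times>real)" by simp
    then have "D (h*a', h*b') = D ((h*a') *\<^sub>R (1,0) + (h*b') *\<^sub>R ((0,1)::real\<times>real))"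
      by (rule arg_cong)
    also have "\<dots> = (h*a') *\<^sub>R D (1,0) + (h*b') *\<^sub>R D (0,1)"
      by (simp only: linear_add[OF lin] linear_scale[OF lin])
    finally have "D (h*a', h*b') = (h*a') *\<^sub>R D (1,0) + (h*b') *\<^sub>R D (0,1)" .
    then show ?thesis by (simp add: algebra_simps)
  qed
  have gen: "((\<lambda>s. V (\<alpha>' s) (\<beta>' s)) has_real_derivative (a' * D (1,0) + b' * D (0,1))) (at s')"
    if h1: "(\<alpha>' has_real_derivative a') (at s')" and h2: "(\<beta>' has_real_derivative b') (at s')"
      and e1: "\<alpha>' s' = x" and e2: "\<beta>' s' = y" for \<alpha>' \<beta>' a' b' s'
  proof -
    have P: "((\<lambda>s. (\<alpha>' s, \<beta>' s)) has_derivative (\<lambda>h. (a' * h, b' * h))) (at s')"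
      using h1 h2 unfolding has_field_derivative_def by (rule has_derivative_Pair)
    have D': "((\<lambda>p. V (fst p) (snd p)) has_derivative D) (at (\<alpha>' s', \<beta>' s'))"
      using D e1 e2 by simp
    have "((\<lambda>s. V (\<alpha>' s) (\<beta>' s)) has_derivative (\<lambda>h. D (a' * h, b' * h))) (at s')"
      using has_derivative_compose[OF P D'] by simp
    moreover have "(\<lambda>h. D (a' * h, b' * h)) = (*) (a' * D (1,0) + b' * D (0,1))"
      using Dsplit by (auto simp: mult.commute)
    ultimately show ?thesis unfolding has_field_derivative_def by simp
  qed
  have p1: "pd1 V x y = D (1,0)"
  proof -
    have "((\<lambda>u. V u y) has_real_derivative (1 * D (1,0) + 0 * D (0,1))) (at x)"
      by (rule gen[where \<alpha>'="\<lambda>u. u" and \<beta>'="\<lambda>u. y"]) (auto intro: derivative_eq_intros)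
    then show ?thesis unfolding pd1_def by (simp add: DERIV_imp_deriv)
  qed
  have p2: "pd2 V x y = D (0,1)"
  proof -
    have "((\<lambda>u. V x u) has_real_derivative (0 * D (1,0) + 1 * D (0,1))) (at y)"
      by (rule gen[where \<alpha>'="\<lambda>u. x" and \<beta>'="\<lambda>u. u"]) (auto intro: derivative_eq_intros)
    then show ?thesis unfolding pd2_def by (simp add: DERIV_imp_deriv)
  qed
  show ?thesis using gen[OF da db ax by_] p1 p2 by simp
qed

lemma oint_deriv:
  fixes f :: "real \<Rightarrow> real"
  assumes S: "open S" "is_interval S" "t0 \<in> S" "t \<in> S" and cf: "continuous_on S f"
  shows "((\<lambda>s. oint t0 s f) has_real_derivative f t) (at t)"
proof -
  have m1: "min t t0 \<in> S" using S by (simp add: min_def)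
  have m2: "max t t0 \<in> S" using S by (simp add: max_def)
  obtain e1 where e1: "e1 > 0" "ball (min t t0) e1 \<subseteq> S"
    using open_contains_ball[of S] S(1) m1 by blast
  obtain e2 where e2: "e2 > 0" "ball (max t t0) e2 \<subseteq> S"
    using open_contains_ball[of S] S(1) m2 by blast
  define a where "a = min t t0 - e1/2"
  define b where "b = max t t0 + e2/2"
  have "a \<in> ball (min t t0) e1" unfolding a_def using e1(1) by (simp add: dist_real_def)
  then have aS: "a \<in> S" using e1(2) by blast
  have "b \<in> ball (max t t0) e2" unfolding b_def using e2(1) by (simp add: dist_real_def)
  then have bS: "b \<in> S" using e2(2) by blast
  have ab: "{a..b} \<subseteq> S"
  proof
    fix x assume "x \<in> {a..b}"
    then have "a \<le> x" "x \<le> b" by auto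
    then show "x \<in> S" using S(2) aS bS unfolding is_interval_1 by blast
  qed
  have cab: "continuous_on {a..b} f" using continuous_on_subset[OF cf ab] .
  have int: "f integrable_on {u..v}" if "a \<le> u" "v \<le> b" for u v
  proof -
    have "{u..v} \<subseteq> {a..b}" using that by auto
    then show ?thesis using integrable_continuous_real[OF continuous_on_subset[OF cab]] by blast
  qed
  have at0: "a \<le> t0" "t0 \<le> b" "a < t" "t < b" using e1(1) e2(1) unfolding a_def b_def by auto
  have eq: "oint t0 s f = integral {a..s} f - integral {a..t0} f" if s: "a < s" "s < b" for s
  proof (cases "t0 \<le> s")
    case True
    have "integral {a..t0} f + integral {t0..s} f = integral {a..s} f"
      by (rule Henstock_Kurzweil_Integration.integral_combine[OF at0(1) True int]) (use s in auto)
    then show ?thesis using True unfolding oint_def by simp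
  next
    case False
    have "integral {a..s} f + integral {s..t0} f = integral {a..t0} f"
      by (rule Henstock_Kurzweil_Integration.integral_combine[OF _ _ int]) (use s False at0 in auto)
    then show ?thesis using False unfolding oint_def by simp
  qed
  have tin: "t \<in> {a<..<b}" using at0 by auto
  have "((\<lambda>u. integral {a..u} f) has_real_derivative f t) (at t within {a..b})"
    using integral_has_real_derivative[OF cab] at0 by auto
  moreover have "at t within {a..b} = at t"
    by (rule at_within_interior) (use at0 in auto)
  ultimately have d: "((\<lambda>u. integral {a..u} f - integral {a..t0} f) has_real_derivative f t) (at t)"
    using DERIV_diff[OF _ DERIV_const] by fastforce
  show ?thesis
    by (rule has_field_derivative_transform_within_open[OF d _ tin]) (auto simp: eq)
qed

lemma real_deriv_of_diff:
  fixes f :: "real \<Rightarrow> real"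
  assumes "f differentiable (at x)"
  shows "(f has_real_derivative deriv f x) (at x)"
  using assms DERIV_deriv_iff_real_differentiable by blast

lemma cole_hopf:
  assumes H: "heat_sol T \<phi>" and nz: "\<forall>s\<in>T. \<forall>y. \<phi> y s \<noteq> 0"
  shows "burgers_sol T (\<lambda>y s. - pd1 \<phi> y s / \<phi> y s)"
  unfolding burgers_sol_def
proof (intro ballI allI conjI)
  fix \<tau> \<eta> assume tT: "\<tau> \<in> T"
  define W where "W = (\<lambda>y s. - pd1 \<phi> y s / \<phi> y s)"
  define P where "P = pd1 \<phi>"
  define Q where "Q = pd1 (pd1 \<phi>)"
  have h: "\<And>y. (\<lambda>p. \<phi> (fst p) (snd p)) differentiable (at (y, \<tau>)) \<and>
        (\<lambda>p. pd1 \<phi> (fst p) (snd p)) differentiable (at (y, \<tau>)) \<and>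
        (\<lambda>y. pd1 (pd1 \<phi>) y \<tau>) differentiable (at y) \<and>
        (\<lambda>y. pd2 \<phi> y \<tau>) differentiable (at y) \<and>
        pd2 (pd1 \<phi>) y \<tau> = pd1 (pd2 \<phi>) y \<tau> \<and>
        pd2 \<phi> y \<tau> = 1 / 2 * pd1 (pd1 \<phi>) y \<tau>"
    using H tT unfolding heat_sol_def by blast
  have nzy: "\<And>y. \<phi> y \<tau> \<noteq> 0" using nz tT by blast
  have dphi: "\<And>y. ((\<lambda>u. \<phi> u \<tau>) has_real_derivative P y \<tau>) (at y)"
    using joint_chain[where \<alpha>="\<lambda>u. u" and \<beta>="\<lambda>u. \<tau>" and a=1 and b=0, OF conjunct1[OF h]]
    unfolding P_def by (auto intro: derivative_eq_intros)
  have dP: "\<And>y. ((\<lambda>u. P u \<tau>) has_real_derivative Q y \<tau>) (at y)"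
    using joint_chain[where \<alpha>="\<lambda>u. u" and \<beta>="\<lambda>u. \<tau>" and a=1 and b=0, OF conjunct1[OF conjunct2[OF h]]]
    unfolding P_def Q_def by (auto intro: derivative_eq_intros)
  have dQ: "\<And>y. ((\<lambda>u. Q u \<tau>) has_real_derivative pd1 Q y \<tau>) (at y)"
    unfolding pd1_def[of Q] using h real_deriv_of_diff unfolding Q_def by blast
  have dphit: "((\<lambda>s. \<phi> \<eta> s) has_real_derivative pd2 \<phi> \<eta> \<tau>) (at \<tau>)"
    using joint_chain[where \<alpha>="\<lambda>u. \<eta>" and \<beta>="\<lambda>u. u" and a=0 and b=1, OF conjunct1[OF h]]
    by (auto intro: derivative_eq_intros)
  have dPt: "((\<lambda>s. P \<eta> s) has_real_derivative pd2 P \<eta> \<tau>) (at \<tau>)"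
    using joint_chain[where \<alpha>="\<lambda>u. \<eta>" and \<beta>="\<lambda>u. u" and a=0 and b=1, OF conjunct1[OF conjunct2[OF h]]]
    unfolding P_def by (auto intro: derivative_eq_intros)
  have pt: "pd2 \<phi> \<eta> \<tau> = Q \<eta> \<tau> / 2" using h unfolding Q_def by simp
  have fun_eq: "(\<lambda>y. pd2 \<phi> y \<tau>) = (\<lambda>y. Q y \<tau> / 2)" using h unfolding Q_def by auto
  have Pt: "pd2 P \<eta> \<tau> = pd1 Q \<eta> \<tau> / 2"
  proof -
    have "pd2 P \<eta> \<tau> = pd1 (pd2 \<phi>) \<eta> \<tau>" using h unfolding P_def by blast
    also have "\<dots> = deriv (\<lambda>y. Q y \<tau> / 2) \<eta>" unfolding pd1_def[of "pd2 \<phi>"] fun_eq by simp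
    also have "\<dots> = pd1 Q \<eta> \<tau> / 2"
      by (rule DERIV_imp_deriv) (auto intro!: derivative_eq_intros dQ)
    finally show ?thesis .
  qed
  have W1f: "pd1 W y \<tau> = (P y \<tau> * P y \<tau> - Q y \<tau> * \<phi> y \<tau>) / (\<phi> y \<tau> * \<phi> y \<tau>)" for y
    unfolding pd1_def W_def P_def[symmetric]
    by (rule DERIV_imp_deriv) (auto intro!: derivative_eq_intros dP dphi nzy simp: field_simps nzy)
  have W1fun: "(\<lambda>y. pd1 W y \<tau>) = (\<lambda>y. (P y \<tau> * P y \<tau> - Q y \<tau> * \<phi> y \<tau>) / (\<phi> y \<tau> * \<phi> y \<tau>))"
    using W1f by auto
  have dW1: "((\<lambda>y. pd1 W y \<tau>) has_real_derivative
      ((Q \<eta> \<tau> * P \<eta> \<tau> + P \<eta> \<tau> * Q \<eta> \<tau> - (pd1 Q \<eta> \<tau> * \<phi> \<eta> \<tau> + Q \<eta> \<tau> * P \<eta> \<tau>)) * (\<phi> \<eta> \<tau> * \<phi> \<eta> \<tau>)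
         - (P \<eta> \<tau> * P \<eta> \<tau> - Q \<eta> \<tau> * \<phi> \<eta> \<tau>) * (P \<eta> \<tau> * \<phi> \<eta> \<tau> + \<phi> \<eta> \<tau> * P \<eta> \<tau>))
        / ((\<phi> \<eta> \<tau> * \<phi> \<eta> \<tau>) * (\<phi> \<eta> \<tau> * \<phi> \<eta> \<tau>))) (at \<eta>)"
    unfolding W1fun
    by (rule derivative_eq_intros dP dphi dQ nzy | simp)+
  have W11: "pd1 (pd1 W) \<eta> \<tau> = 
      ((Q \<eta> \<tau> * P \<eta> \<tau> + P \<eta> \<tau> * Q \<eta> \<tau> - (pd1 Q \<eta> \<tau> * \<phi> \<eta> \<tau> + Q \<eta> \<tau> * P \<eta> \<tau>)) * (\<phi> \<eta> \<tau> * \<phi> \<eta> \<tau>)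
         - (P \<eta> \<tau> * P \<eta> \<tau> - Q \<eta> \<tau> * \<phi> \<eta> \<tau>) * (P \<eta> \<tau> * \<phi> \<eta> \<tau> + \<phi> \<eta> \<tau> * P \<eta> \<tau>))
        / ((\<phi> \<eta> \<tau> * \<phi> \<eta> \<tau>) * (\<phi> \<eta> \<tau> * \<phi> \<eta> \<tau>))"
    unfolding pd1_def[of "pd1 W"] using DERIV_imp_deriv[OF dW1] .
  have W2: "pd2 W \<eta> \<tau> = - (pd2 P \<eta> \<tau> * \<phi> \<eta> \<tau> - P \<eta> \<tau> * pd2 \<phi> \<eta> \<tau>) / (\<phi> \<eta> \<tau> * \<phi> \<eta> \<tau>)"
    unfolding pd2_def[of W] unfolding W_def P_def[symmetric]
    by (rule DERIV_imp_deriv) (auto intro!: derivative_eq_intros dPt dphit nzy simp: field_simps nzy)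
  show "(\<lambda>p. - pd1 \<phi> (fst p) (snd p) / \<phi> (fst p) (snd p)) differentiable (at (\<eta>, \<tau>))"
    using h nzy by (auto intro!: derivative_intros)
  show "(\<lambda>y. pd1 (\<lambda>y s. - pd1 \<phi> y s / \<phi> y s) y \<tau>) differentiable (at \<eta>)"
    using dW1 unfolding W_def real_differentiable_def by blast
  have "pd2 W \<eta> \<tau> + W \<eta> \<tau> * pd1 W \<eta> \<tau> = 1 / 2 * pd1 (pd1 W) \<eta> \<tau>"
    unfolding W11 W2 W1f Pt pt using nzy[of \<eta>]
    by (simp add: W_def P_def[symmetric] field_simps)
  then show "pd2 (\<lambda>y s. - pd1 \<phi> y s / \<phi> y s) \<eta> \<tau> +
        - pd1 \<phi> \<eta> \<tau> / \<phi> \<eta> \<tau> * pd1 (\<lambda>y s. - pd1 \<phi> y s / \<phi> y s) \<eta> \<tau> =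
        1 / 2 * pd1 (pd1 (\<lambda>y s. - pd1 \<phi> y s / \<phi> y s)) \<eta> \<tau>"
    unfolding W_def .
qed


lemma alg_a:
  fixes R R1 R2 M M1 om c x W W1 W2 W11 :: real
  assumes nz: "R \<noteq> 0" "M \<noteq> 0" and B: "W2 + W*W1 = 1/2*W11" and O: "R2 + M1/M*R1 + om*R = 0"
  shows "((R2*R - R1*R1)/(R*R)*x + ((-(c*(M1*R + M*R1))/((M*R)*(M*R))) * W
          + ((-(c*R1)/(R*R)*x)*W1 + (c\<^sup>2*(1/(M*R\<^sup>2)))*W2) * (c/(M*R))))
   + M1/M * (R1/R*x + c/(M*R)*W) + (R1/R*x + c/(M*R)*W) * (R1/R*1 + c/(M*R)*(c/R*W1))
   = 1/(2*M) * (0 + c/(M*R)*(c/R*(W11*(c/R)))) - om*x"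
proof -
  have w2: "W2 = 1/2*W11 - W*W1" using B by simp
  have om: "om = -(R2 + M1/M*R1)/R" using O nz by (simp add: field_simps)
  show ?thesis unfolding w2 om using nz
    by (simp add: field_simps power2_eq_square)
qed

lemma part_a:
  fixes mu omega2 r r' r'' \<tau> :: "real \<Rightarrow> real" and J :: "real set" and c :: real
    and V :: "real \<Rightarrow> real \<Rightarrow> real"
  assumes mu_d: "\<And>t. t \<in> J \<Longrightarrow> (mu has_real_derivative deriv mu t) (at t)"
    and mu_nz: "\<And>t. t \<in> J \<Longrightarrow> mu t \<noteq> 0"
    and r_d1: "\<And>t. t \<in> J \<Longrightarrow> (r has_real_derivative r' t) (at t)"
    and r_d2: "\<And>t. t \<in> J \<Longrightarrow> (r' has_real_derivative r'' t) (at t)"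
    and ode: "\<And>t. t \<in> J \<Longrightarrow> r'' t + deriv mu t / mu t * r' t + omega2 t * r t = 0"
    and r_nz: "\<And>t. t \<in> J \<Longrightarrow> r t \<noteq> 0"
    and tau_d: "\<And>t. t \<in> J \<Longrightarrow> (\<tau> has_real_derivative c\<^sup>2 * (1 / (mu t * (r t)\<^sup>2))) (at t)"
    and B: "burgers_sol (\<tau> ` J) V"
  shows "nh_burgers_sol mu omega2 J (\<lambda>x t. r' t / r t * x + c / (mu t * r t) * V (c / r t * x) (\<tau> t))"
  unfolding nh_burgers_sol_def
proof (intro ballI allI conjI)
  fix t x assume tJ: "t \<in> J"
  define U where "U = (\<lambda>x t. r' t / r t * x + c / (mu t * r t) * V (c / r t * x) (\<tau> t))"
  have sJ: "\<tau> t \<in> \<tau> ` J" using tJ by blast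
  have hB: "\<And>y. (\<lambda>p. V (fst p) (snd p)) differentiable (at (y, \<tau> t)) \<and>
        (\<lambda>y. pd1 V y (\<tau> t)) differentiable (at y) \<and>
        pd2 V y (\<tau> t) + V y (\<tau> t) * pd1 V y (\<tau> t) = 1 / 2 * pd1 (pd1 V) y (\<tau> t)"
    using B sJ unfolding burgers_sol_def by blast
  have rnz: "r t \<noteq> 0" and mnz: "mu t \<noteq> 0" using tJ r_nz mu_nz by auto
  have dlin: "((\<lambda>u. c / r t * u) has_real_derivative c / r t) (at y)" for y
    using DERIV_cmult[OF DERIV_ident, of "c / r t"] by simp
  have dVk: "((\<lambda>u. V (c / r t * u) (\<tau> t)) has_real_derivative c / r t * pd1 V (c / r t * y) (\<tau> t) + 0 * pd2 V (c / r t * y) (\<tau> t)) (at y)" for y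
    by (rule joint_chain[OF conjunct1[OF hB] dlin DERIV_const]) auto
  have dV11: "((\<lambda>u. pd1 V u (\<tau> t)) has_real_derivative pd1 (pd1 V) y (\<tau> t)) (at y)" for y
    unfolding pd1_def[of "pd1 V"] using hB real_deriv_of_diff by blast
  have dUx: "((\<lambda>u. U u t) has_real_derivative r' t / r t * 1 + c / (mu t * r t) * (c / r t * pd1 V (c / r t * y) (\<tau> t) + 0 * pd2 V (c / r t * y) (\<tau> t))) (at y)" for y
    unfolding U_def by (intro DERIV_add DERIV_cmult DERIV_ident dVk)
  have U1: "pd1 U y t = r' t / r t * 1 + c / (mu t * r t) * (c / r t * pd1 V (c / r t * y) (\<tau> t) + 0 * pd2 V (c / r t * y) (\<tau> t))" for y
    unfolding pd1_def[of U] using DERIV_imp_deriv[OF dUx] .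
  show "(\<lambda>y. (\<lambda>x t. r' t / r t * x + c / (mu t * r t) * V (c / r t * x) (\<tau> t)) y t) differentiable (at x)"
    using dUx unfolding U_def real_differentiable_def by blast
  have U1fun: "(\<lambda>y. pd1 U y t) = (\<lambda>y. r' t / r t * 1 + c / (mu t * r t) * (c / r t * pd1 V (c / r t * y) (\<tau> t)))"
    using U1 by auto
  have dchain: "((\<lambda>y. pd1 V (c / r t * y) (\<tau> t)) has_real_derivative pd1 (pd1 V) (c / r t * x) (\<tau> t) * (c / r t)) (at x)"
    using DERIV_chain2[OF dV11 dlin] .
  have dU1: "((\<lambda>y. pd1 U y t) has_real_derivative 0 + c / (mu t * r t) * (c / r t * (pd1 (pd1 V) (c / r t * x) (\<tau> t) * (c / r t)))) (at x)"
    unfolding U1fun by (intro DERIV_add DERIV_cmult DERIV_const dchain)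
  show "(\<lambda>y. pd1 (\<lambda>x t. r' t / r t * x + c / (mu t * r t) * V (c / r t * x) (\<tau> t)) y t) differentiable (at x)"
    using dU1 unfolding U_def real_differentiable_def by blast
  have U11: "pd1 (pd1 U) x t = 0 + c / (mu t * r t) * (c / r t * (pd1 (pd1 V) (c / r t * x) (\<tau> t) * (c / r t)))"
    unfolding pd1_def[of "pd1 U"] using DERIV_imp_deriv[OF dU1] .
  have dal: "((\<lambda>s. c / r s * x) has_real_derivative (-(c * r' t) / (r t * r t) * x)) (at t)"
    by (auto intro!: derivative_eq_intros r_d1[OF tJ] simp: rnz field_simps)
  have hV: "((\<lambda>s. V (c / r s * x) (\<tau> s)) has_real_derivative
       (-(c * r' t) / (r t * r t) * x) * pd1 V (c / r t * x) (\<tau> t) + (c\<^sup>2 * (1 / (mu t * (r t)\<^sup>2))) * pd2 V (c / r t * x) (\<tau> t)) (at t)"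
    by (rule joint_chain[OF conjunct1[OF hB] dal tau_d[OF tJ]]) auto
  have d1: "((\<lambda>s. r' s / r s * x) has_real_derivative ((r'' t * r t - r' t * r' t) / (r t * r t) * x)) (at t)"
    using DERIV_cmult_right[OF DERIV_divide[OF r_d2[OF tJ] r_d1[OF tJ] rnz], of x] .
  have d2: "((\<lambda>s. c / (mu s * r s)) has_real_derivative (-(c * (deriv mu t * r t + mu t * r' t)) / ((mu t * r t) * (mu t * r t)))) (at t)"
    by (rule DERIV_cong[OF DERIV_divide[OF DERIV_const DERIV_mult[OF mu_d[OF tJ] r_d1[OF tJ]]]]) (use rnz mnz in \<open>simp_all add: algebra_simps\<close>)
  have dUt: "((\<lambda>s. U x s) has_real_derivative
      (r'' t * r t - r' t * r' t) / (r t * r t) * x + ((-(c * (deriv mu t * r t + mu t * r' t)) / ((mu t * r t) * (mu t * r t))) * V (c / r t * x) (\<tau> t)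
      + ((-(c * r' t) / (r t * r t) * x) * pd1 V (c / r t * x) (\<tau> t) + (c\<^sup>2 * (1 / (mu t * (r t)\<^sup>2))) * pd2 V (c / r t * x) (\<tau> t)) * (c / (mu t * r t)))) (at t)"
    unfolding U_def by (intro DERIV_add DERIV_mult d1 d2 hV)
  show "(\<lambda>s. (\<lambda>x t. r' t / r t * x + c / (mu t * r t) * V (c / r t * x) (\<tau> t)) x s) differentiable (at t)"
    using dUt unfolding U_def real_differentiable_def by blast
  have U2: "pd2 U x t = (r'' t * r t - r' t * r' t) / (r t * r t) * x + ((-(c * (deriv mu t * r t + mu t * r' t)) / ((mu t * r t) * (mu t * r t))) * V (c / r t * x) (\<tau> t)
      + ((-(c * r' t) / (r t * r t) * x) * pd1 V (c / r t * x) (\<tau> t) + (c\<^sup>2 * (1 / (mu t * (r t)\<^sup>2))) * pd2 V (c / r t * x) (\<tau> t)) * (c / (mu t * r t)))"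
    unfolding pd2_def[of U] using DERIV_imp_deriv[OF dUt] .
  have U0: "U x t = r' t / r t * x + c / (mu t * r t) * V (c / r t * x) (\<tau> t)"
    unfolding U_def by simp
  have U1': "pd1 U x t = r' t / r t * 1 + c / (mu t * r t) * (c / r t * pd1 V (c / r t * x) (\<tau> t))"
    using U1[of x] by simp
  have eqB: "pd2 V (c / r t * x) (\<tau> t) + V (c / r t * x) (\<tau> t) * pd1 V (c / r t * x) (\<tau> t) = 1 / 2 * pd1 (pd1 V) (c / r t * x) (\<tau> t)"
    using hB by blast
  have "pd2 U x t + deriv mu t / mu t * U x t + U x t * pd1 U x t = 1 / (2 * mu t) * pd1 (pd1 U) x t - omega2 t * x"
    unfolding U2 U0 U1' U11
    by (rule alg_a[OF rnz mnz eqB ode[OF tJ]])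
  then show "pd2 (\<lambda>x t. r' t / r t * x + c / (mu t * r t) * V (c / r t * x) (\<tau> t)) x t +
        deriv mu t / mu t * (\<lambda>x t. r' t / r t * x + c / (mu t * r t) * V (c / r t * x) (\<tau> t)) x t +
        (\<lambda>x t. r' t / r t * x + c / (mu t * r t) * V (c / r t * x) (\<tau> t)) x t *
        pd1 (\<lambda>x t. r' t / r t * x + c / (mu t * r t) * V (c / r t * x) (\<tau> t)) x t
        = 1 / (2 * mu t) * pd1 (pd1 (\<lambda>x t. r' t / r t * x + c / (mu t * r t) * V (c / r t * x) (\<tau> t))) x t - omega2 t * x"
    unfolding U_def .
qed

theorem proposition2p1:
  fixes mu omega2 r r' r'' :: "real \<Rightarrow> real"
    and J :: "real set" and t0 :: real
    and U0 :: "real \<Rightarrow> real"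
  assumes J: "open J" "is_interval J" "t0 \<in> J"
    and mu_deriv: "\<And>t. t \<in> J \<Longrightarrow> mu differentiable (at t)"
    and mu_nz: "\<And>t. t \<in> J \<Longrightarrow> mu t \<noteq> 0"
    and r_d1: "\<And>t. t \<in> J \<Longrightarrow> (r has_real_derivative r' t) (at t)"
    and r_d2: "\<And>t. t \<in> J \<Longrightarrow> (r' has_real_derivative r'' t) (at t)"
    and ode: "\<And>t. t \<in> J \<Longrightarrow> r'' t + deriv mu t / mu t * r' t + omega2 t * r t = 0"
    and r_nz: "\<And>t. t \<in> J \<Longrightarrow> r t \<noteq> 0"
    and init: "r t0 \<noteq> 0" "r' t0 = 0"
  defines "\<tau> \<equiv> (\<lambda>t. (r t0)\<^sup>2 * oint t0 t (\<lambda>\<xi>. 1 / (mu \<xi> * (r \<xi>)\<^sup>2)))"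
    and "\<eta> \<equiv> (\<lambda>x t. r t0 / r t * x)"
  shows
    "(\<forall>V. burgers_sol (\<tau> ` J) V \<and> (\<forall>y. V y 0 = mu t0 * U0 y) \<longrightarrow>
        (let U = (\<lambda>x t. r' t / r t * x + r t0 / (mu t * r t) * V (\<eta> x t) (\<tau> t))
         in nh_burgers_sol mu omega2 J U \<and> (\<forall>x. U x t0 = U0 x)))
   \<and>
    (\<forall>\<phi>. continuous_on UNIV U0 \<and> heat_sol (\<tau> ` J) \<phi> \<and>
          (\<forall>s\<in>\<tau> ` J. \<forall>y. \<phi> y s \<noteq> 0) \<and>
          (\<forall>y. \<phi> y 0 = exp (- oint 0 y (\<lambda>\<xi>. mu t0 * U0 \<xi>))) \<longrightarrow>
        (let U = (\<lambda>x t. r' t / r t * x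
                    - r t0 / (mu t * r t) * (pd1 \<phi> (\<eta> x t) (\<tau> t) / \<phi> (\<eta> x t) (\<tau> t)))
         in nh_burgers_sol mu omega2 J U \<and> (\<forall>x. U x t0 = U0 x)))"
proof -
  have mu_d: "\<And>t. t \<in> J \<Longrightarrow> (mu has_real_derivative deriv mu t) (at t)"
    using mu_deriv real_deriv_of_diff by blast
  have cont: "continuous_on J (\<lambda>\<xi>. 1 / (mu \<xi> * (r \<xi>)\<^sup>2))"
  proof (rule continuous_at_imp_continuous_on, rule ballI)
    fix t assume tJ: "t \<in> J"
    have "isCont mu t" using DERIV_isCont[OF mu_d[OF tJ]] .
    moreover have "isCont r t" using DERIV_isCont[OF r_d1[OF tJ]] .
    ultimately show "isCont (\<lambda>\<xi>. 1 / (mu \<xi> * (r \<xi>)\<^sup>2)) t"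
      using mu_nz[OF tJ] r_nz[OF tJ] by (auto intro!: continuous_intros)
  qed
  have tau_d: "\<And>t. t \<in> J \<Longrightarrow> (\<tau> has_real_derivative (r t0)\<^sup>2 * (1 / (mu t * (r t)\<^sup>2))) (at t)"
    unfolding \<tau>_def by (rule DERIV_cmult, rule oint_deriv[OF J(1) J(2) J(3) _ cont])
  have tau0: "\<tau> t0 = 0" unfolding \<tau>_def oint_def by simp
  have eta0: "\<eta> x t0 = x" for x unfolding \<eta>_def using init(1) by simp
  have mu0: "mu t0 \<noteq> 0" using mu_nz J(3) by blast
  have PA: "\<And>V. burgers_sol (\<tau> ` J) V \<Longrightarrow>
      nh_burgers_sol mu omega2 J (\<lambda>x t. r' t / r t * x + r t0 / (mu t * r t) * V (\<eta> x t) (\<tau> t))"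
    unfolding \<eta>_def by (rule part_a[OF mu_d mu_nz r_d1 r_d2 ode r_nz tau_d]) auto
  show ?thesis
  proof (intro conjI allI impI)
    fix V assume hV: "burgers_sol (\<tau> ` J) V \<and> (\<forall>y. V y 0 = mu t0 * U0 y)"
    show "let U = (\<lambda>x t. r' t / r t * x + r t0 / (mu t * r t) * V (\<eta> x t) (\<tau> t))
         in nh_burgers_sol mu omega2 J U \<and> (\<forall>x. U x t0 = U0 x)"
      unfolding Let_def
    proof (intro conjI allI)
      show "nh_burgers_sol mu omega2 J (\<lambda>x t. r' t / r t * x + r t0 / (mu t * r t) * V (\<eta> x t) (\<tau> t))"
        using PA hV by blast
      fix x
      show "r' t0 / r t0 * x + r t0 / (mu t0 * r t0) * V (\<eta> x t0) (\<tau> t0) = U0 x"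
        unfolding eta0 tau0 using hV init mu0 by simp
    qed
  next
    fix \<phi> assume h\<phi>: "continuous_on UNIV U0 \<and> heat_sol (\<tau> ` J) \<phi> \<and>
          (\<forall>s\<in>\<tau> ` J. \<forall>y. \<phi> y s \<noteq> 0) \<and>
          (\<forall>y. \<phi> y 0 = exp (- oint 0 y (\<lambda>\<xi>. mu t0 * U0 \<xi>)))"
    define W where "W = (\<lambda>y s. - pd1 \<phi> y s / \<phi> y s)"
    have BW: "burgers_sol (\<tau> ` J) W" unfolding W_def by (rule cole_hopf) (use h\<phi> in auto)
    have Ueq: "(\<lambda>x t. r' t / r t * x
                    - r t0 / (mu t * r t) * (pd1 \<phi> (\<eta> x t) (\<tau> t) / \<phi> (\<eta> x t) (\<tau> t)))
       = (\<lambda>x t. r' t / r t * x + r t0 / (mu t * r t) * W (\<eta> x t) (\<tau> t))"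
      unfolding W_def by (auto simp: fun_eq_iff)
    have gc: "continuous_on UNIV (\<lambda>\<xi>. mu t0 * U0 \<xi>)"
      using h\<phi> by (auto intro!: continuous_intros)
    have phi0: "(\<lambda>y. \<phi> y 0) = (\<lambda>y. exp (- oint 0 y (\<lambda>\<xi>. mu t0 * U0 \<xi>)))"
      using h\<phi> by auto
    have dphi0: "pd1 \<phi> x 0 = exp (- oint 0 x (\<lambda>\<xi>. mu t0 * U0 \<xi>)) * (- (mu t0 * U0 x))" for x
      unfolding pd1_def phi0
      by (rule DERIV_imp_deriv, rule DERIV_chain2[OF DERIV_exp], rule DERIV_minus,
          rule oint_deriv[OF open_UNIV is_interval_univ _ _ gc]) auto
    show "let U = (\<lambda>x t. r' t / r t * x
                    - r t0 / (mu t * r t) * (pd1 \<phi> (\<eta> x t) (\<tau> t) / \<phi> (\<eta> x t) (\<tau> t)))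
         in nh_burgers_sol mu omega2 J U \<and> (\<forall>x. U x t0 = U0 x)"
      unfolding Let_def Ueq
    proof (intro conjI allI)
      show "nh_burgers_sol mu omega2 J (\<lambda>x t. r' t / r t * x + r t0 / (mu t * r t) * W (\<eta> x t) (\<tau> t))"
        using PA BW by blast
      fix x
      show "r' t0 / r t0 * x + r t0 / (mu t0 * r t0) * W (\<eta> x t0) (\<tau> t0) = U0 x"
        unfolding eta0 tau0 W_def dphi0 using h\<phi> init mu0 by simp
    qed
  qed
qed

end
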